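(* Let $p,p'\ge1$ with $|p-p'|=1$ and let $S=\alpha_{(p,p')}(S')$ where $S'$ is a Sturmian word in which $bb$ does not occur. Let $P$ be a palindrome that is maximal in $S$. Then $P$ is original (in the level $S=\alpha_{(p,p')}(S')$) if and only if $|P|_b\le 1$.
   Context: $\alpha_{(p,p')}$ is the morphism $a\mapsto a^pb$, $b\mapsto a^{p'}b$. A Sturmian word is a right-infinite aperiodic word over $\{a,b\}$ with exactly $n+1$ factors of each length $n$. A palindrome $P$ is maximal in $S$ if $lPl'$ is a factor of $S$ for some letters $l\neq l'$; such an occurrence of $P$ is a maximal occurrence. A center occurrence is an occurrence of $a$, $b$ or $aa$. Write $S'=y_1y_2\cdots$, $S=\alpha(y_1)\alpha(y_2)\cdots$, $\alpha(y_j)$ occupying positions $s_j+1,\dots,s_j+|\alpha(y_j)|$, $s_j=\sum_{t<j}|\alpha(y_t)|$. The reflection of an occurrence $y_j=a$ (resp. $b$) is the center (middle letter if odd length, middle two letters if even) of the run $a^p$ (resp. $a^{p'}$) at positions $s_j+1,\dots,s_j+p$ (resp. $s_j+p'$); the reflection of an occurrence $y_jy_{j+1}=aa$ is the $b$ at position $s_j+p+1$. A center occurrence of $S$ is original if it is not the reflection of any center occurrence of $S'$. A maximal palindrome $P$ of $S$ is original if some maximal occurrence of $P$ in $S$ has an original center occurrence, and is a reflection otherwise. *)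

theory Defs
  imports Main
begin

(* Words over the alphabet {a,b}.  Right-infinite words are functions nat => letter,
   positions are 0-based (position k here = position k+1 in the paper). *)
datatype letter = A | B

type_synonym iword = "nat \<Rightarrow> letter"

definition fac :: "iword \<Rightarrow> nat \<Rightarrow> nat \<Rightarrow> letter list" where
  "fac w i n = map w [i..<i+n]"

definition factors :: "iword \<Rightarrow> nat \<Rightarrow> letter list set" where
  "factors w n = {fac w i n | i. True}"

definition is_factor :: "letter list \<Rightarrow> iword \<Rightarrow> bool" where
  "is_factor u w \<longleftrightarrow> (\<exists>i. fac w i (length u) = u)"

definition aperiodic :: "iword \<Rightarrow> bool" where
  "aperiodic w \<longleftrightarrow> \<not> (\<exists>q>0. \<exists>N. \<forall>i\<ge>N. w (i + q) = w i)"

definition sturmian :: "iword \<Rightarrow> bool" where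
  "sturmian w \<longleftrightarrow> aperiodic w \<and> (\<forall>n. card (factors w n) = n + 1)"

definition alpha :: "nat \<Rightarrow> nat \<Rightarrow> letter \<Rightarrow> letter list" where
  "alpha p p' x = (case x of A \<Rightarrow> replicate p A @ [B] | B \<Rightarrow> replicate p' A @ [B])"

definition offs :: "nat \<Rightarrow> nat \<Rightarrow> iword \<Rightarrow> nat \<Rightarrow> nat" where
  "offs p p' y j = (\<Sum>t<j. length (alpha p p' (y t)))"

(* S = alpha(y_0) alpha(y_1) ... ; block j occupies 0-based positions offs j .. offs j + |alpha(y_j)| - 1 *)
definition morph_image :: "nat \<Rightarrow> nat \<Rightarrow> iword \<Rightarrow> iword \<Rightarrow> bool" where
  "morph_image p p' y S \<longleftrightarrow>
     (\<forall>j i. i < length (alpha p p' (y j)) \<longrightarrow> S (offs p p' y j + i) = alpha p p' (y j) ! i)"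

definition palindrome :: "letter list \<Rightarrow> bool" where
  "palindrome P \<longleftrightarrow> rev P = P"

(* An occurrence of a factor is a pair (start position, length). *)
definition maximal_occ :: "iword \<Rightarrow> letter list \<Rightarrow> nat \<Rightarrow> bool" where
  "maximal_occ S P k \<longleftrightarrow> 1 \<le> k \<and> fac S k (length P) = P \<and> S (k - 1) \<noteq> S (k + length P)"

definition maximal_in :: "letter list \<Rightarrow> iword \<Rightarrow> bool" where
  "maximal_in P S \<longleftrightarrow> (\<exists>l l'. l \<noteq> l' \<and> is_factor (l # P @ [l']) S)"

definition center :: "nat \<Rightarrow> nat \<Rightarrow> nat \<times> nat" where
  "center k n = (if odd n then (k + n div 2, 1) else (k + n div 2 - 1, 2))"

definition center_occ :: "iword \<Rightarrow> nat \<times> nat \<Rightarrow> bool" where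
  "center_occ w c \<longleftrightarrow> (let (i, n) = c in fac w i n \<in> {[A], [B], [A, A]})"

(* reflections in S = alpha_(p,p')(y) of the center occurrences of y *)
definition reflections :: "nat \<Rightarrow> nat \<Rightarrow> iword \<Rightarrow> (nat \<times> nat) set" where
  "reflections p p' y =
     {center (offs p p' y j) (if y j = A then p else p') | j. True}
     \<union> {(offs p p' y j + p, 1) | j. y j = A \<and> y (Suc j) = A}"

definition original_center :: "nat \<Rightarrow> nat \<Rightarrow> iword \<Rightarrow> iword \<Rightarrow> nat \<times> nat \<Rightarrow> bool" where
  "original_center p p' y S c \<longleftrightarrow> center_occ S c \<and> c \<notin> reflections p p' y"

definition original_pal :: "nat \<Rightarrow> nat \<Rightarrow> iword \<Rightarrow> iword \<Rightarrow> letter list \<Rightarrow> bool" where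
  "original_pal p p' y S P \<longleftrightarrow>
     (\<exists>k. maximal_occ S P k \<and> original_center p p' y S (center k (length P)))"

end

theory Submission
  imports Defs
begin

lemma fac_nth: "t < n \<Longrightarrow> fac S k n ! t = S (k+t)"
  by (simp add: fac_def)

lemma pal_sym:
  assumes "palindrome (fac S k n)" "k \<le> m" "m < k+n"
  shows "S m = S (2*k+n-1-m)"
proof -
  define t where "t = m - k"
  have t: "t < n" using assms unfolding t_def by simp
  have "rev (fac S k n) ! t = fac S k n ! t" using assms(1) by (simp add: palindrome_def)
  moreover have "rev (fac S k n) ! t = fac S k n ! (n - Suc t)"
    using t by (simp add: rev_nth fac_def)
  ultimately have "S (k+t) = S (k + (n - Suc t))" using t by (simp add: fac_nth)
  moreover have "k + t = m" "k + (n - Suc t) = 2*k+n-1-m" using assms t unfolding t_def by auto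
  ultimately show ?thesis by simp
qed

lemma count_le1:
  "count_list (fac S k n) B \<le> 1 \<longleftrightarrow>
   (\<forall>m1 m2. k \<le> m1 \<longrightarrow> m1 < k+n \<longrightarrow> k \<le> m2 \<longrightarrow> m2 < k+n \<longrightarrow> S m1 = B \<longrightarrow> S m2 = B \<longrightarrow> m1 = m2)"
proof -
  have "count_list (fac S k n) B = length (filter (\<lambda>m. B = S m) [k..<k+n])"
    by (simp add: fac_def count_list_eq_length_filter filter_map comp_def)
  also have "\<dots> = card (set (filter (\<lambda>m. B = S m) [k..<k+n]))"
    by (metis distinct_card distinct_filter distinct_upt)
  also have "set (filter (\<lambda>m. B = S m) [k..<k+n]) = {m. k \<le> m \<and> m < k+n \<and> S m = B}"
    by auto
  finally have c: "count_list (fac S k n) B = card {m. k \<le> m \<and> m < k+n \<and> S m = B}" .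
  have f: "finite {m. k \<le> m \<and> m < k+n \<and> S m = B}" by simp
  show ?thesis unfolding c using card_le_Suc0_iff_eq[OF f] by auto
qed


lemma nearest:
  fixes S :: iword and k n M a b m0 :: nat
  assumes sym: "\<forall>m. k \<le> m \<longrightarrow> m < k+n \<longrightarrow> S m = S (M - m)"
    and M: "M + 1 = 2*k+n" and ab: "a + b = M" and a_lt: "a < k+n"
    and m0: "k \<le> m0" "m0 < k+n" "S m0 = B" "m0 \<le> a \<or> b \<le> m0"
  shows "\<exists>L R. k \<le> L \<and> L \<le> a \<and> b \<le> R \<and> R < k+n \<and> S L = B \<and> S R = B \<and> L + R = M
     \<and> (\<forall>m. L < m \<longrightarrow> m < R \<longrightarrow> (m \<le> a \<or> b \<le> m) \<longrightarrow> S m \<noteq> B)"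
proof -
  obtain m1 where m1: "k \<le> m1" "m1 \<le> a" "S m1 = B"
  proof (cases "m0 \<le> a")
    case True then show ?thesis using m0 that by blast
  next
    case False
    then have "b \<le> m0" using m0 by simp
    then have "M - m0 \<le> a" "k \<le> M - m0" using ab M m0 by auto
    moreover have "S (M - m0) = B" using sym m0 by metis
    ultimately show ?thesis using that by blast
  qed
  define Ls where "Ls = {m. k \<le> m \<and> m \<le> a \<and> S m = B}"
  have fin: "finite Ls" unfolding Ls_def by (rule finite_subset[of _ "{..a}"]) auto
  have m1L: "m1 \<in> Ls" using m1 unfolding Ls_def by simp
  define L where "L = Max Ls"
  have LL: "L \<in> Ls" unfolding L_def using fin m1L Max_in by blast
  have Lmax: "\<And>m. m \<in> Ls \<Longrightarrow> m \<le> L" unfolding L_def using fin Max_ge by blast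
  have L: "k \<le> L" "L \<le> a" "S L = B" using LL unfolding Ls_def by auto
  define R where "R = M - L"
  have R: "b \<le> R" "R < k+n" "L + R = M" using L ab M a_lt unfolding R_def by auto
  have SR: "S R = B" using sym L a_lt unfolding R_def by (metis less_le_trans le_less_trans)
  have "\<forall>m. L < m \<longrightarrow> m < R \<longrightarrow> (m \<le> a \<or> b \<le> m) \<longrightarrow> S m \<noteq> B"
  proof (intro allI impI notI)
    fix m assume lm: "L < m" "m < R" "m \<le> a \<or> b \<le> m" and sm: "S m = B"
    show False
    proof (cases "m \<le> a")
      case True
      then have "m \<in> Ls" using lm L sm unfolding Ls_def by simp
      then show False using Lmax lm by fastforce
    next
      case False
      then have bm: "b \<le> m" using lm by simp
      have "S (M - m) = B" using sym sm lm L R by (metis less_trans le_less_trans less_imp_le)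
      moreover have "k \<le> M - m" "M - m \<le> a" using bm lm R ab L by auto
      ultimately have "M - m \<in> Ls" unfolding Ls_def by simp
      then have "M - m \<le> L" using Lmax by blast
      then show False using lm R by simp
    qed
  qed
  then show ?thesis using L R SR by blast
qed

locale W =
  fixes p p' :: nat and y S :: iword
  assumes p1: "1 \<le> p" and p1': "1 \<le> p'" and mi: "morph_image p p' y S"
begin

abbreviation ofs where "ofs j \<equiv> offs p p' y j"
definition r where "r j = (if y j = A then p else p')"

lemma len: "length (alpha p p' (y j)) = r j + 1"
  by (cases "y j") (simp_all add: alpha_def r_def)

lemma ofs0: "ofs 0 = 0" by (simp add: offs_def)
lemma ofsS: "ofs (Suc j) = ofs j + r j + 1" by (simp add: offs_def len)
lemma rpos: "1 \<le> r j" using p1 p1' by (simp add: r_def)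

lemma SA: "i < r j \<Longrightarrow> S (ofs j + i) = A"
proof -
  assume i: "i < r j"
  have "S (ofs j + i) = alpha p p' (y j) ! i" using mi i len unfolding morph_image_def by simp
  also have "\<dots> = A" using i by (cases "y j") (auto simp: alpha_def r_def nth_append)
  finally show ?thesis .
qed

lemma SB: "S (ofs j + r j) = B"
proof -
  have "S (ofs j + r j) = alpha p p' (y j) ! r j" using mi len unfolding morph_image_def by simp
  also have "\<dots> = B" by (cases "y j") (auto simp: alpha_def r_def nth_append)
  finally show ?thesis .
qed

lemma decomp: "\<exists>j i. i \<le> r j \<and> m = ofs j + i"
proof (induction m)
  case 0 show ?case using ofs0 by (intro exI[of _ 0]) auto
next
  case (Suc m)
  then obtain j i where ji: "i \<le> r j" "m = ofs j + i" by blast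
  show ?case
  proof (cases "i < r j")
    case True then show ?thesis using ji by (intro exI[of _ j] exI[of _ "Suc i"]) auto
  next
    case False then show ?thesis using ji ofsS[of j] by (intro exI[of _ "Suc j"] exI[of _ 0]) auto
  qed
qed

lemma Bpos: "S m = B \<Longrightarrow> \<exists>j. m = ofs j + r j"
proof -
  assume b: "S m = B"
  obtain j i where ji: "i \<le> r j" "m = ofs j + i" using decomp by blast
  have "i = r j" using SA[of i j] b ji by (cases "i < r j") auto
  then show ?thesis using ji by (intro exI[of _ j]) auto
qed

lemma ofs_less: "j < j' \<Longrightarrow> ofs j + r j < ofs j'"
proof (induction j')
  case 0 then show ?case by simp
next
  case (Suc j')
  then show ?case using ofsS[of j'] by (cases "j = j'") auto
qed

lemma ofs_inj: "ofs j = ofs j' \<Longrightarrow> j = j'"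
  using ofs_less[of j j'] ofs_less[of j' j] by (cases j j' rule: linorder_cases) auto

lemma noBB: "S m = B \<Longrightarrow> S (Suc m) = A"
proof -
  assume "S m = B"
  then obtain j where j: "m = ofs j + r j" using Bpos by blast
  have "S (ofs (Suc j) + 0) = A" using SA rpos[of "Suc j"] by (intro SA) auto
  then show ?thesis using j ofsS[of j] by simp
qed

lemma between:
  assumes "S x = B" "S z = B" "x < z" "\<forall>m. x < m \<longrightarrow> m < z \<longrightarrow> S m \<noteq> B"
  shows "\<exists>j. x + 1 = ofs j \<and> z = ofs j + r j"
proof -
  obtain j0 where j0: "x = ofs j0 + r j0" using Bpos assms(1) by blast
  obtain j1 where j1: "z = ofs j1 + r j1" using Bpos assms(2) by blast
  have "j1 = Suc j0"
  proof (rule ccontr)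
    assume ne: "j1 \<noteq> Suc j0"
    show False
    proof (cases "j1 \<le> j0")
      case True
      then show False
      proof (cases "j1 = j0")
        case True then show False using j0 j1 assms(3) by simp
      next
        case False
        then have "ofs j1 + r j1 < ofs j0" using ofs_less \<open>j1 \<le> j0\<close> by simp
        then show False using j0 j1 assms(3) by simp
      qed
    next
      case False
      then have lt: "Suc j0 < j1" using ne by simp
      let ?m = "ofs (Suc j0) + r (Suc j0)"
      have "x < ?m" using ofsS[of j0] j0 by simp
      moreover have "?m < z" using ofs_less[OF lt] j1 by simp
      ultimately show False using assms(4) SB by blast
    qed
  qed
  then show ?thesis using j0 j1 ofsS[of j0] by (intro exI[of _ "Suc j0"]) simp
qed


end

lemma center_eq:
  assumes "center k n = center k' n'" "1 \<le> n" "1 \<le> n'"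
  shows "2*k + n = 2*k' + n'"
proof -
  have e: "(if odd n then (k + n div 2, 1::nat) else (k + n div 2 - 1, 2))
     = (if odd n' then (k' + n' div 2, 1) else (k' + n' div 2 - 1, 2))"
    using assms(1) by (simp add: center_def)
  show ?thesis
  proof (cases "odd n")
    case True
    then have o': "odd n'" and e1: "k + n div 2 = k' + n' div 2" using e by (auto split: if_splits)
    obtain q where q: "n = 2*q + 1" using True oddE by blast
    obtain q' where q': "n' = 2*q' + 1" using o' oddE by blast
    show ?thesis using e1 q q' by simp
  next
    case False
    then have o': "even n'" and e1: "k + n div 2 - 1 = k' + n' div 2 - 1" using e by (auto split: if_splits)
    obtain q where q: "n = 2*q" using False evenE by blast
    obtain q' where q': "n' = 2*q'" using o' evenE by blast
    have "1 \<le> q" "1 \<le> q'" using q q' assms(2,3) by auto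
    then show ?thesis using e1 q q' by simp
  qed
qed

lemma center_sum:
  assumes "2*x + u = 2*k + (n::nat)" "1 \<le> n" "1 \<le> u"
  shows "center k n = center x u"
proof -
  have "odd n \<longleftrightarrow> odd u" using assms(1) by presburger
  moreover have "k + n div 2 = x + u div 2" using assms(1) by presburger
  ultimately show ?thesis unfolding center_def by auto
qed

lemma fac2: "fac w j 2 = [w j, w (Suc j)]"
  by (simp add: fac_def numeral_2_eq_2)

context W
begin

lemma cocc:
  assumes n1: "1 \<le> n" and sym: "\<forall>m. k \<le> m \<longrightarrow> m < k+n \<longrightarrow> S m = S (2*k+n-1-m)"
  shows "center_occ S (center k n)"
proof (cases "odd n")
  case True
  have "fac S (k + n div 2) 1 = [S (k + n div 2)]" by (simp add: fac_def)
  moreover have "S (k + n div 2) = A \<or> S (k + n div 2) = B" by (cases "S (k + n div 2)") simp_all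
  ultimately show ?thesis using True unfolding center_def center_occ_def by auto
next
  case False
  define c where "c = k + n div 2 - 1"
  have n2: "2 \<le> n" using False n1 by presburger
  have c1: "k \<le> c" "c < k + n" using n2 unfolding c_def by simp_all
  have "S c = S (2*k+n-1-c)" using sym c1 by blast
  moreover have "2*k+n-1-c = Suc c" using n2 False unfolding c_def by presburger
  ultimately have eq: "S c = S (Suc c)" by simp
  have "S c = A" using noBB[of c] eq by (cases "S c") auto
  then have "fac S c 2 = [A, A]" using eq by (simp add: fac2)
  moreover have "center k n = (c, 2)" using False unfolding center_def c_def by simp
  ultimately show ?thesis unfolding center_occ_def by simp
qed

lemma ofs_pos: "1 \<le> ofs j \<Longrightarrow> \<exists>j0. j = Suc j0"
  using ofs0 by (cases j) auto

lemma bwd: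
  assumes n1: "1 \<le> n" and sym: "\<forall>m. k \<le> m \<longrightarrow> m < k+n \<longrightarrow> S m = S (2*k+n-1-m)"
    and k1: "1 \<le> k" and mx: "S (k-1) \<noteq> S (k+n)"
    and one: "\<forall>m1 m2. k \<le> m1 \<longrightarrow> m1 < k+n \<longrightarrow> k \<le> m2 \<longrightarrow> m2 < k+n \<longrightarrow> S m1 = B \<longrightarrow> S m2 = B \<longrightarrow> m1 = m2"
  shows "center k n \<notin> reflections p p' y"
proof
  assume "center k n \<in> reflections p p' y"
  then consider (r1) j where "center k n = center (ofs j) (r j)"
    | (r2) j where "center k n = (ofs j + p, 1)" "y j = A" "y (Suc j) = A"
    unfolding reflections_def r_def by blast
  then show False
  proof cases
    case (r1 j)
    have eq: "2*k + n = 2*ofs j + r j" using center_eq[OF r1 n1 rpos[of j]] .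
    show False
    proof (cases "\<exists>m0. k \<le> m0 \<and> m0 < k+n \<and> S m0 = B")
      case True
      then obtain m0 where m0: "k \<le> m0" "m0 < k+n" "S m0 = B" by blast
      have "S m0 = S (2*k+n-1-m0)" using sym m0(1,2) by blast
      then have sb: "S (2*k+n-1-m0) = B" using m0(3) by simp
      have kb: "k \<le> 2*k+n-1-m0" "2*k+n-1-m0 < k+n" using m0(1,2) by auto
      have "2*k+n-1-m0 = m0" using one[rule_format, OF kb m0(1,2) sb m0(3)] .
      then have e2: "2*ofs j + r j = 2*m0 + 1" using eq n1 by simp
      then have "ofs j \<le> m0" by simp
      then have "r j = 2*(m0 - ofs j) + 1" using e2 by simp
      then have "m0 - ofs j < r j" by simp
      then have "S (ofs j + (m0 - ofs j)) = A" by (rule SA)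
      then show False using m0 \<open>ofs j \<le> m0\<close> by simp
    next
      case False
      then have noB: "\<And>m0. k \<le> m0 \<Longrightarrow> m0 < k+n \<Longrightarrow> S m0 \<noteq> B" by blast
      consider "r j < n" | "n < r j" | "n = r j" by linarith
      then show False
      proof cases
        case 1
        then have "k \<le> ofs j + r j" "ofs j + r j < k + n" using eq by auto
        then show False using noB SB[of j] by blast
      next
        case 2
        then have "ofs j \<le> k - 1" "k - 1 - ofs j < r j" "k + n - ofs j < r j" "ofs j \<le> k + n"
          using eq k1 by auto
        then have "S (ofs j + (k - 1 - ofs j)) = A" "S (ofs j + (k + n - ofs j)) = A"
          using SA by blast+
        moreover have "ofs j + (k - 1 - ofs j) = k - 1" "ofs j + (k + n - ofs j) = k + n"
          using \<open>ofs j \<le> k - 1\<close> \<open>ofs j \<le> k + n\<close> by simp_all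
        ultimately show False using mx by simp
      next
        case 3
        then have kk: "k = ofs j" using eq by simp
        then obtain j0 where j0: "j = Suc j0" using ofs_pos k1 by blast
        have "S (k - 1) = B" using kk j0 ofsS[of j0] SB[of j0] by simp
        moreover have "S (k + n) = B" using kk 3 SB[of j] by simp
        ultimately show False using mx by simp
      qed
    qed
  next
    case (r2 j)
    have rj: "r j = p" "r (Suc j) = p" using r2 unfolding r_def by simp_all
    have "odd n" using r2(1) unfolding center_def by (auto split: if_splits)
    then obtain h where h: "n = 2*h + 1" using oddE by blast
    have m0: "k + h = ofs j + p" using r2(1) h unfolding center_def by simp
    have Sm0: "S (k + h) = B" using m0 SB[of j] rj by simp
    have sj: "ofs (Suc j) = k + h + 1" using ofsS[of j] rj m0 by simp
    consider "p + 1 \<le> h" | "h < p" | "h = p" by linarith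
    then show False
    proof cases
      case 1
      have "S (ofs (Suc j) + r (Suc j)) = B" by (rule SB)
      moreover have "k \<le> ofs (Suc j) + r (Suc j)" "ofs (Suc j) + r (Suc j) < k + n"
        using sj rj 1 h by auto
      moreover have "k \<le> k + h" "k + h < k + n" using h by simp_all
      ultimately have "ofs (Suc j) + r (Suc j) = k + h"
        using one Sm0 by blast
      then show False using sj by simp
    next
      case 2
      have "S (ofs (Suc j) + h) = A" using 2 rj by (intro SA) simp
      moreover have "S (ofs j + (p - h - 1)) = A" using 2 rj by (intro SA) simp
      moreover have "ofs (Suc j) + h = k + n" using sj h by simp
      moreover have "ofs j + (p - h - 1) = k - 1" using m0 2 by simp
      ultimately show False using mx by simp
    next
      case 3
      have kk: "k = ofs j" using m0 3 by simp
      then obtain j0 where j0: "j = Suc j0" using ofs_pos k1 by blast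
      have "S (k - 1) = B" using kk j0 ofsS[of j0] SB[of j0] by simp
      moreover have "S (k + n) = B" using sj h 3 rj SB[of "Suc j"] by (simp add: mult_2 add.assoc)
      ultimately show False using mx by simp
    qed
  qed
qed

lemma fwd:
  assumes pp: "p \<noteq> p'" and nbb: "\<not> is_factor [B,B] y"
    and n1: "1 \<le> n" and sym: "\<forall>m. k \<le> m \<longrightarrow> m < k+n \<longrightarrow> S m = S (2*k+n-1-m)"
    and m12: "k \<le> m1" "m1 < k+n" "k \<le> m2" "m2 < k+n" "S m1 = B" "S m2 = B" "m1 \<noteq> m2"
  shows "center k n \<in> reflections p p' y"
proof -
  define M where "M = 2*k+n-1"
  have M: "M + 1 = 2*k+n" using n1 unfolding M_def by simp
  have symM: "\<forall>m. k \<le> m \<longrightarrow> m < k+n \<longrightarrow> S m = S (M - m)" using sym unfolding M_def by blast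
  define a where "a = M div 2"
  define b where "b = M - a"
  have ab: "a + b = M" "a < k+n" "a \<le> b" "b \<le> a + 1" using M unfolding a_def b_def by auto
  have m1ab: "m1 \<le> a \<or> b \<le> m1" using ab(4) by auto
  obtain L R where LR: "k \<le> L" "L \<le> a" "b \<le> R" "R < k+n" "S L = B" "S R = B" "L + R = M"
     and btw: "\<forall>m. L < m \<longrightarrow> m < R \<longrightarrow> (m \<le> a \<or> b \<le> m) \<longrightarrow> S m \<noteq> B"
    using nearest[OF symM M ab(1) ab(2) m12(1,2,5) m1ab] by blast
  show ?thesis
  proof (cases "L < R")
    case True
    have btw0: "\<forall>m. L < m \<longrightarrow> m < R \<longrightarrow> S m \<noteq> B"
    proof (intro allI impI)
      fix m assume h: "L < m" "m < R"
      have "m \<le> a \<or> b \<le> m" using ab(4) by auto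
      then show "S m \<noteq> B" using btw h by blast
    qed
    obtain j where j: "L + 1 = ofs j" "R = ofs j + r j" using between[OF LR(5,6) True btw0] by blast
    have "2 * ofs j + r j = 2*k + n" using j LR(7) M by simp
    then have c: "center k n = center (ofs j) (r j)"
      using center_sum[OF _ n1 rpos[of j]] by blast
    have "center (ofs j) (r j) \<in> {center (offs p p' y j) (if y j = A then p else p') | j. True}"
      unfolding r_def by blast
    then show ?thesis unfolding reflections_def c by (rule UnI1)
  next
    case False
    then have LeqR: "L = R" using LR(2,3) ab(3) by simp
    obtain m where m: "k \<le> m" "m < k+n" "S m = B" "m \<noteq> L"
    proof (cases "m1 = L")
      case True then show ?thesis using that[OF m12(3,4,6)] m12(7) by simp
    next
      case False then show ?thesis using that[OF m12(1,2,5) False] by simp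
    qed
    have L1: "1 \<le> L"
    proof (rule ccontr)
      assume "\<not> 1 \<le> L"
      then have "M = 0" using LR(7) LeqR by simp
      then have "k = 0" "n = 1" using M n1 by simp_all
      then show False using m12 by simp
    qed
    have ab2: "(L - 1) + (L + 1) = M" "L - 1 < k + n" using LR LeqR L1 by auto
    have mab: "m \<le> L - 1 \<or> L + 1 \<le> m" using m(4) by auto
    obtain L' R' where LR': "k \<le> L'" "L' \<le> L - 1" "L + 1 \<le> R'" "R' < k+n" "S L' = B" "S R' = B" "L' + R' = M"
       and btw': "\<forall>m'. L' < m' \<longrightarrow> m' < R' \<longrightarrow> (m' \<le> L - 1 \<or> L + 1 \<le> m') \<longrightarrow> S m' \<noteq> B"
      using nearest[OF symM M ab2 m(1,2,3) mab] by blast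
    have b1: "\<forall>m'. L' < m' \<longrightarrow> m' < L \<longrightarrow> S m' \<noteq> B"
    proof (intro allI impI)
      fix m' assume h: "L' < m'" "m' < L"
      then have "m' \<le> L - 1" by simp
      then show "S m' \<noteq> B" using btw' h LR'(3) by simp
    qed
    have b2: "\<forall>m'. L < m' \<longrightarrow> m' < R' \<longrightarrow> S m' \<noteq> B"
    proof (intro allI impI)
      fix m' assume h: "L < m'" "m' < R'"
      then have "L + 1 \<le> m'" by simp
      moreover have "L' < m'" using h LR'(2) L1 by simp
      ultimately show "S m' \<noteq> B" using btw' h by simp
    qed
    have lt1: "L' < L" using LR'(2) L1 by simp
    have lt2: "L < R'" using LR'(3) by simp
    obtain j where j: "L' + 1 = ofs j" "L = ofs j + r j"
      using between[OF LR'(5) LR(5) lt1 b1] by blast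
    obtain j' where j': "L + 1 = ofs j'" "R' = ofs j' + r j'"
      using between[OF LR(5) LR'(6) lt2 b2] by blast
    have "ofs (Suc j) = ofs j'" using j j' ofsS[of j] by simp
    then have jj: "j' = Suc j" using ofs_inj by simp
    have "L + L = M" using LR(7) LeqR by simp
    then have req: "r j = r (Suc j)" using j j' jj LR'(7) by simp
    have yj: "y j = A"
    proof (rule ccontr)
      assume "y j \<noteq> A"
      then have yB: "y j = B" by (cases "y j") auto
      then have h: "y (Suc j) = B" using req pp unfolding r_def by (cases "y (Suc j)") auto
      have "is_factor [B,B] y" unfolding is_factor_def fac_def using yB h
        by (intro exI[of _ j]) (simp add: upt_rec)
      then show False using nbb by simp
    qed
    have ysj: "y (Suc j) = A" using req pp yj unfolding r_def by (cases "y (Suc j)") auto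
    have "center k n = (ofs j + p, 1)"
    proof -
      have "2*L + 1 = 2*k + n" using \<open>L + L = M\<close> M by simp
      then have nn: "n = 2*(L-k)+1" using LR(1) by simp
      then have "odd n" "k + n div 2 = L" using LR(1) by simp_all
      then show ?thesis using j yj unfolding center_def r_def by simp
    qed
    then have c: "center k n = (ofs j + p, 1)" .
    have "(ofs j + p, 1) \<in> {(offs p p' y j + p, 1) | j. y j = A \<and> y (Suc j) = A}"
      using yj ysj by blast
    then show ?thesis unfolding reflections_def c by (rule UnI2)
  qed
qed

end


lemma fac_split:
  assumes "fac S i (length (l # P @ [l'])) = l # P @ [l']"
  shows "S i = l" "fac S (Suc i) (length P) = P" "S (Suc i + length P) = l'"
proof -
  have u1: "[i..<i + length (l # P @ [l'])] = [i..<Suc i + length P] @ [Suc i + length P]"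
    by (simp add: upt_Suc_append del: upt_Suc)
  have u2: "[i..<Suc i + length P] = i # [Suc i..<Suc i + length P]"
    by (rule upt_conv_Cons) simp
  have u: "[i..<i + length (l # P @ [l'])] = i # [Suc i..<Suc i + length P] @ [Suc i + length P]"
    using u1 u2 by simp
  have "S i # fac S (Suc i) (length P) @ [S (Suc i + length P)] = l # P @ [l']"
    using assms unfolding fac_def u by simp
  then show "S i = l" "fac S (Suc i) (length P) = P" "S (Suc i + length P) = l'"
    by (auto simp: fac_def)
qed

theorem lemma4:
  fixes p p' :: nat and S' S :: iword and P :: "letter list"
  assumes "p \<ge> 1" and "p' \<ge> 1" and "p = p' + 1 \<or> p' = p + 1"
    and "sturmian S'"
    and "\<not> is_factor [B, B] S'"
    and "morph_image p p' S' S"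
    and "palindrome P" and "P \<noteq> []"
    and "maximal_in P S"
  shows "original_pal p p' S' S P \<longleftrightarrow> count_list P B \<le> 1"
proof -
  interpret W p p' S' S using assms(1,2,6) by unfold_locales auto
  have pp: "p \<noteq> p'" using assms(3) by auto
  have n1: "1 \<le> length P" using assms(8) by (cases P) auto
  show ?thesis
  proof
    assume "original_pal p p' S' S P"
    then obtain k where mo: "maximal_occ S P k"
      and oc: "original_center p p' S' S (center k (length P))"
      unfolding original_pal_def by blast
    have facP: "fac S k (length P) = P" using mo unfolding maximal_occ_def by blast
    have pal: "palindrome (fac S k (length P))" using facP assms(7) by simp
    have sym: "\<forall>m. k \<le> m \<longrightarrow> m < k + length P \<longrightarrow> S m = S (2*k+length P-1-m)"
      using pal_sym[OF pal] by blast
    show "count_list P B \<le> 1"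
    proof (rule ccontr)
      assume "\<not> count_list P B \<le> 1"
      then have "\<not> count_list (fac S k (length P)) B \<le> 1" using facP by simp
      then obtain m1 m2 where m12: "k \<le> m1" "m1 < k + length P" "k \<le> m2" "m2 < k + length P"
        "S m1 = B" "S m2 = B" "m1 \<noteq> m2"
        unfolding count_le1 by blast
      have "center k (length P) \<in> reflections p p' S'"
        by (rule fwd[OF pp assms(5) n1 sym m12])
      then show False using oc unfolding original_center_def by blast
    qed
  next
    assume c: "count_list P B \<le> 1"
    obtain l l' i where ll: "l \<noteq> l'" "fac S i (length (l # P @ [l'])) = l # P @ [l']"
      using assms(9) unfolding maximal_in_def is_factor_def by blast
    define k where "k = Suc i"
    have facP: "fac S k (length P) = P" and sl: "S (k - 1) = l" and sl': "S (k + length P) = l'"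
      using fac_split[OF ll(2)] unfolding k_def by simp_all
    have mo: "maximal_occ S P k" unfolding maximal_occ_def using facP sl sl' ll(1) k_def by simp
    have pal: "palindrome (fac S k (length P))" using facP assms(7) by simp
    have sym: "\<forall>m. k \<le> m \<longrightarrow> m < k + length P \<longrightarrow> S m = S (2*k+length P-1-m)"
      using pal_sym[OF pal] by blast
    have one: "\<forall>m1 m2. k \<le> m1 \<longrightarrow> m1 < k + length P \<longrightarrow> k \<le> m2 \<longrightarrow> m2 < k + length P
        \<longrightarrow> S m1 = B \<longrightarrow> S m2 = B \<longrightarrow> m1 = m2"
      using c facP count_le1[of S k "length P"] by simp
    have k1: "1 \<le> k" unfolding k_def by simp
    have mx: "S (k - 1) \<noteq> S (k + length P)" using sl sl' ll(1) by simp
    have "original_center p p' S' S (center k (length P))"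
      unfolding original_center_def using cocc[OF n1 sym] bwd[OF n1 sym k1 mx one] by blast
    then show "original_pal p p' S' S P" unfolding original_pal_def using mo by blast
  qed
qed

end
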